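(* Let $V$ be a commutative unital quantale whose underlying lattice is a frame and in which $k=\top$. Let $(X,a)$ and $(Y,b)$ be $V$-groups, $\varphi\colon Y\to\mathrm{Aut}(X)$ a group action, and $X\rtimes Y$ the semidirect product group defined by $\varphi$. The following are equivalent: (i) $(X,a)\xrightarrow{\langle 1,0\rangle}(X\rtimes Y,a\otimes b)\underset{\langle 0,1\rangle}{\overset{\pi_2}{\rightleftarrows}}(Y,b)$ is a split extension in $\mathsf{VGrp}$, where $(a\otimes b)((x,y),(x',y'))=a(x,x')\otimes b(y,y')$; (ii) the map $\overline{\varphi}\colon(X\times Y,a\otimes b)\to(X\times Y,a\otimes b)$, $(x,y)\mapsto(\varphi_y(x),y)$, is a $V$-functor.
   Context: A commutative unital quantale $V$ is a complete lattice with a commutative associative operation $\otimes$ with unit $k$ preserving arbitrary joins in each variable. A $V$-category $(X,a)$: $a\colon X\times X\to V$ with $k\le a(x,x)$ and $a(x,x')\otimes a(x',x'')\le a(x,x'')$; a $V$-functor is a map $f$ with $a(x,x')\le b(f(x),f(x'))$. A $V$-group $(X,a,+)$ is a $V$-category with a group structure (additive, not necessarily abelian) such that $a(x_1,x_2)\otimes a(x_1',x_2')\le a(x_1+x_1',x_2+x_2')$; $V$-homomorphisms are group homomorphisms that are $V$-functors; category $\mathsf{VGrp}$ (pointed since $k=\top$). The semidirect product $X\rtimes Y$ is $X\times Y$ with $(x,y)+(x',y')=(x+\varphi_y(x'),y+y')$, $\varphi_y=\varphi(y)$; $\langle 1,0\rangle(x)=(x,0)$, $\langle 0,1\rangle(y)=(0,y)$,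 $\pi_2(x,y)=y$. A split extension in $\mathsf{VGrp}$ means: the structure on the middle object makes it a $V$-group, all three maps are $V$-homomorphisms, $\pi_2\circ\langle 0,1\rangle=1_Y$, and $\langle 1,0\rangle$ is a kernel of $\pi_2$ in $\mathsf{VGrp}$. *)

theory Defs
  imports Main
begin

definition comm_unital_quantale :: "('v::complete_lattice \<Rightarrow> 'v \<Rightarrow> 'v) \<Rightarrow> 'v \<Rightarrow> bool" where
  "comm_unital_quantale tensor k \<longleftrightarrow>
     (\<forall>u v w. tensor (tensor u v) w = tensor u (tensor v w)) \<and>
     (\<forall>u v. tensor u v = tensor v u) \<and>
     (\<forall>u. tensor u k = u \<and> tensor k u = u) \<and>
     (\<forall>u A. tensor u (Sup A) = Sup (tensor u ` A)) \<and>
     (\<forall>u A. tensor (Sup A) u = Sup ((\<lambda>v. tensor v u) ` A))"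

definition is_frame :: "'v::complete_lattice itself \<Rightarrow> bool" where
  "is_frame _ \<longleftrightarrow> (\<forall>(u::'v) A. inf u (Sup A) = Sup ((\<lambda>v. inf u v) ` A))"

definition vcat :: "('v::complete_lattice \<Rightarrow> 'v \<Rightarrow> 'v) \<Rightarrow> 'v \<Rightarrow> ('x \<Rightarrow> 'x \<Rightarrow> 'v) \<Rightarrow> bool" where
  "vcat tensor k a \<longleftrightarrow>
     (\<forall>x. k \<le> a x x) \<and> (\<forall>x x' x''. tensor (a x x') (a x' x'') \<le> a x x'')"

definition vfunctor :: "('x \<Rightarrow> 'x \<Rightarrow> 'v::complete_lattice) \<Rightarrow> ('y \<Rightarrow> 'y \<Rightarrow> 'v) \<Rightarrow> ('x \<Rightarrow> 'y) \<Rightarrow> bool" where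
  "vfunctor a b f \<longleftrightarrow> (\<forall>x x'. a x x' \<le> b (f x) (f x'))"

definition is_group :: "('x \<Rightarrow> 'x \<Rightarrow> 'x) \<Rightarrow> bool" where
  "is_group opr \<longleftrightarrow> (\<exists>z inv. group opr z inv)"

definition vgroup :: "('v::complete_lattice \<Rightarrow> 'v \<Rightarrow> 'v) \<Rightarrow> 'v \<Rightarrow> ('x \<Rightarrow> 'x \<Rightarrow> 'v) \<Rightarrow> ('x \<Rightarrow> 'x \<Rightarrow> 'x) \<Rightarrow> bool" where
  "vgroup tensor k a opr \<longleftrightarrow>
     vcat tensor k a \<and> is_group opr \<and>
     (\<forall>x1 x2 x1' x2'. tensor (a x1 x2) (a x1' x2') \<le> a (opr x1 x1') (opr x2 x2'))"

definition group_hom :: "('x \<Rightarrow> 'x \<Rightarrow> 'x) \<Rightarrow> ('y \<Rightarrow> 'y \<Rightarrow> 'y) \<Rightarrow> ('x \<Rightarrow> 'y) \<Rightarrow> bool" where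
  "group_hom plusX plusY f \<longleftrightarrow> (\<forall>x x'. f (plusX x x') = plusY (f x) (f x'))"

definition vhom :: "('x \<Rightarrow> 'x \<Rightarrow> 'v::complete_lattice) \<Rightarrow> ('x \<Rightarrow> 'x \<Rightarrow> 'x)
                    \<Rightarrow> ('y \<Rightarrow> 'y \<Rightarrow> 'v) \<Rightarrow> ('y \<Rightarrow> 'y \<Rightarrow> 'y) \<Rightarrow> ('x \<Rightarrow> 'y) \<Rightarrow> bool" where
  "vhom a plusX b plusY f \<longleftrightarrow> group_hom plusX plusY f \<and> vfunctor a b f"

text \<open>e : (K,c) \<rightarrow> (M,m) is a kernel of p : (M,m) \<rightarrow> (Y,b) in VGrp
  (zero morphisms are the constant maps to the neutral element, VGrp being pointed),
  tested against all V-groups whose carrier is the type 'z.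
  In the main theorem 'z is a free (hence universally quantified) type variable.\<close>
definition is_vgrp_kernel ::
  "'z itself \<Rightarrow> ('v::complete_lattice \<Rightarrow> 'v \<Rightarrow> 'v) \<Rightarrow> 'v
   \<Rightarrow> ('k \<Rightarrow> 'k \<Rightarrow> 'v) \<Rightarrow> ('k \<Rightarrow> 'k \<Rightarrow> 'k)
   \<Rightarrow> ('m \<Rightarrow> 'm \<Rightarrow> 'v) \<Rightarrow> ('m \<Rightarrow> 'm \<Rightarrow> 'm)
   \<Rightarrow> 'y \<Rightarrow> ('k \<Rightarrow> 'm) \<Rightarrow> ('m \<Rightarrow> 'y) \<Rightarrow> bool" where
  "is_vgrp_kernel _ tensor k c plusK m plusM zeroY e p \<longleftrightarrow>
     (\<forall>x. p (e x) = zeroY) \<and>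
     (\<forall>(plusZ :: 'z \<Rightarrow> 'z \<Rightarrow> 'z) d g.
        vgroup tensor k d plusZ \<and> vhom d plusZ m plusM g \<and> (\<forall>z. p (g z) = zeroY) \<longrightarrow>
        (\<exists>!h. vhom d plusZ c plusK h \<and> (\<forall>z. e (h z) = g z)))"

definition group_action :: "('y::group_add \<Rightarrow> 'x::group_add \<Rightarrow> 'x) \<Rightarrow> bool" where
  "group_action \<phi> \<longleftrightarrow>
     (\<forall>y. bij (\<phi> y) \<and> (\<forall>x x'. \<phi> y (x + x') = \<phi> y x + \<phi> y x')) \<and>
     (\<forall>y y'. \<phi> (y + y') = \<phi> y \<circ> \<phi> y')"

definition sdp_plus :: "('y::group_add \<Rightarrow> 'x::group_add \<Rightarrow> 'x) \<Rightarrow> 'x \<times> 'y \<Rightarrow> 'x \<times> 'y \<Rightarrow> 'x \<times> 'y" where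
  "sdp_plus \<phi> p q = (fst p + \<phi> (snd p) (fst q), snd p + snd q)"

definition tensor_struct :: "('v \<Rightarrow> 'v \<Rightarrow> 'v) \<Rightarrow> ('x \<Rightarrow> 'x \<Rightarrow> 'v) \<Rightarrow> ('y \<Rightarrow> 'y \<Rightarrow> 'v)
                             \<Rightarrow> 'x \<times> 'y \<Rightarrow> 'x \<times> 'y \<Rightarrow> 'v" where
  "tensor_struct tensor a b p q = tensor (a (fst p) (fst q)) (b (snd p) (snd q))"

definition incl1 :: "'x \<Rightarrow> 'x \<times> 'y::zero" where "incl1 x = (x, 0)"
definition incl2 :: "'y \<Rightarrow> 'x::zero \<times> 'y" where "incl2 y = (0, y)"

definition phibar :: "('y \<Rightarrow> 'x \<Rightarrow> 'x) \<Rightarrow> 'x \<times> 'y \<Rightarrow> 'x \<times> 'y" where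
  "phibar \<phi> p = (\<phi> (snd p) (fst p), snd p)"

definition split_ext_sdp :: "'z itself \<Rightarrow> ('v::complete_lattice \<Rightarrow> 'v \<Rightarrow> 'v) \<Rightarrow> 'v
   \<Rightarrow> ('x::group_add \<Rightarrow> 'x \<Rightarrow> 'v) \<Rightarrow> ('y::group_add \<Rightarrow> 'y \<Rightarrow> 'v) \<Rightarrow> ('y \<Rightarrow> 'x \<Rightarrow> 'x) \<Rightarrow> bool" where
  "split_ext_sdp tz tensor k a b \<phi> \<longleftrightarrow>
     (let m = tensor_struct tensor a b; plusM = sdp_plus \<phi> in
       vgroup tensor k m plusM \<and>
       vhom a (+) m plusM incl1 \<and>
       vhom m plusM b (+) snd \<and>
       vhom b (+) m plusM incl2 \<and>
       (\<forall>y. snd (incl2 y :: 'x \<times> 'y) = y) \<and>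
       is_vgrp_kernel tz tensor k a (+) m plusM 0 incl1 snd)"

end

theory Submission
  imports Defs
begin

lemma q_mono_r:
  assumes "comm_unital_quantale T k" "v \<le> w"
  shows "T u v \<le> T u w"
proof -
  have "T u (Sup {v, w}) = Sup (T u ` {v, w})" using assms(1) unfolding comm_unital_quantale_def by blast
  moreover have "Sup {v, w} = w" using assms(2) by (simp add: sup_absorb2)
  ultimately have "T u w = sup (T u v) (T u w)" by simp
  thus ?thesis by (metis sup.cobounded1)
qed

lemma q_comm: "comm_unital_quantale T k \<Longrightarrow> T u v = T v u"
  unfolding comm_unital_quantale_def by blast

lemma q_assoc: "comm_unital_quantale T k \<Longrightarrow> T (T u v) w = T u (T v w)"
  unfolding comm_unital_quantale_def by blast

lemma q_lcomm:
  assumes "comm_unital_quantale T k"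
  shows "T u (T v w) = T v (T u w)"
proof -
  have "T u (T v w) = T (T u v) w" using q_assoc[OF assms] by simp
  also have "\<dots> = T (T v u) w" using q_comm[OF assms, of u v] by simp
  also have "\<dots> = T v (T u w)" using q_assoc[OF assms] by simp
  finally show ?thesis .
qed

lemma q_unit: "comm_unital_quantale T k \<Longrightarrow> T u k = u"
  unfolding comm_unital_quantale_def by blast

lemma q_mono_l:
  assumes "comm_unital_quantale T k" "v \<le> w"
  shows "T v u \<le> T w u"
  using q_mono_r[OF assms] q_comm[OF assms(1)] by metis

lemma q_mono2:
  assumes "comm_unital_quantale T k" "v \<le> w" "v' \<le> w'"
  shows "T v v' \<le> T w w'"
  by (meson assms order_trans q_mono_l q_mono_r)

lemma q_le_r:
  assumes "comm_unital_quantale T top"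
  shows "T u v \<le> v"
proof -
  have "T u v \<le> T top v" by (rule q_mono_l[OF assms]) simp
  also have "\<dots> = v" using q_unit[OF assms] q_comm[OF assms] by metis
  finally show ?thesis .
qed

lemma q_le_l:
  assumes "comm_unital_quantale T top"
  shows "T u v \<le> u"
  using q_le_r[OF assms] q_comm[OF assms] by metis

lemma q_top_r: "comm_unital_quantale T top \<Longrightarrow> T u top = u"
  by (rule q_unit)

lemma q_top_l: "comm_unital_quantale T top \<Longrightarrow> T top u = u"
  using q_unit q_comm by metis

lemma ga_zero:
  assumes "group_action \<phi>"
  shows "\<phi> y 0 = 0"
proof -
  have "\<phi> y (0 + 0) = \<phi> y 0 + \<phi> y 0" using assms unfolding group_action_def by blast
  hence "\<phi> y 0 + \<phi> y 0 = \<phi> y 0 + 0" by simp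
  thus ?thesis by (simp only: add_left_cancel)
qed

lemma ga_add:
  assumes "group_action \<phi>"
  shows "\<phi> y (x + x') = \<phi> y x + \<phi> y x'"
  using assms unfolding group_action_def by blast

lemma ga_comp:
  assumes "group_action \<phi>"
  shows "\<phi> (y + y') x = \<phi> y (\<phi> y' x)"
  using assms unfolding group_action_def by simp

lemma ga_id:
  assumes "group_action \<phi>"
  shows "\<phi> 0 x = x"
proof -
  have b: "bij (\<phi> 0)" using assms unfolding group_action_def by blast
  have "\<phi> 0 (\<phi> 0 x) = \<phi> 0 x" using ga_comp[OF assms, of 0 0 x] by simp
  thus ?thesis using injD[OF bij_is_inj[OF b]] by blast
qed

lemma sdp_group:
  assumes "group_action (\<phi>::'y::group_add \<Rightarrow> 'x::group_add \<Rightarrow> 'x)"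
  shows "is_group (sdp_plus \<phi>)"
  unfolding is_group_def
proof (intro exI)
  show "group (sdp_plus \<phi>) (0,0) (\<lambda>p. (\<phi> (- snd p) (- fst p), - snd p))"
  proof
    fix p q r :: "'x \<times> 'y"
    show "sdp_plus \<phi> (sdp_plus \<phi> p q) r = sdp_plus \<phi> p (sdp_plus \<phi> q r)"
      by (simp add: sdp_plus_def ga_add[OF assms] ga_comp[OF assms] add.assoc)
    show "sdp_plus \<phi> (0, 0) p = p"
      by (simp add: sdp_plus_def ga_id[OF assms])
    show "sdp_plus \<phi> (\<phi> (- snd p) (- fst p), - snd p) p = (0, 0)"
      by (simp add: sdp_plus_def ga_add[OF assms, symmetric] ga_zero[OF assms])
  qed
qed

theorem theorem7p2:
  fixes tensor :: "'v::complete_lattice \<Rightarrow> 'v \<Rightarrow> 'v" and k :: 'v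
    and a :: "'x::group_add \<Rightarrow> 'x \<Rightarrow> 'v" and b :: "'y::group_add \<Rightarrow> 'y \<Rightarrow> 'v"
    and \<phi> :: "'y \<Rightarrow> 'x \<Rightarrow> 'x"
  assumes "comm_unital_quantale tensor k"
    and "is_frame TYPE('v)"
    and "k = top"
    and "vgroup tensor k a (+)"
    and "vgroup tensor k b (+)"
    and "group_action \<phi>"
  shows "split_ext_sdp TYPE('z) tensor k a b \<phi> \<longleftrightarrow>
         vfunctor (tensor_struct tensor a b) (tensor_struct tensor a b) (phibar \<phi>)"
proof -
  note Q = assms(1)[unfolded assms(3)]
  note ga = assms(6)
  have a0: "a x x = top" for x using assms(4,3) unfolding vgroup_def vcat_def by (simp add: top_unique)
  have b0: "b y y = top" for y using assms(5,3) unfolding vgroup_def vcat_def by (simp add: top_unique)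
  have atr: "tensor (a x x') (a x' x'') \<le> a x x''" for x x' x''
    using assms(4) unfolding vgroup_def vcat_def by blast
  have btr: "tensor (b x x') (b x' x'') \<le> b x x''" for x x' x''
    using assms(5) unfolding vgroup_def vcat_def by blast
  have aplus: "tensor (a x1 x2) (a x1' x2') \<le> a (x1 + x1') (x2 + x2')" for x1 x2 x1' x2'
    using assms(4) unfolding vgroup_def by blast
  have bplus: "tensor (b x1 x2) (b x1' x2') \<le> b (x1 + x1') (x2 + x2')" for x1 x2 x1' x2'
    using assms(5) unfolding vgroup_def by blast
  note AC = q_assoc[OF Q] q_comm[OF Q] q_lcomm[OF Q]
  have swap4: "tensor (tensor p q) (tensor r s) = tensor (tensor p r) (tensor q s)" for p q r s
    by (simp only: AC)
  define m where "m = tensor_struct tensor a b"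
  define P where "P = sdp_plus \<phi>"
  show ?thesis
  proof
    assume "split_ext_sdp TYPE('z) tensor k a b \<phi>"
    hence vg: "vgroup tensor k m P" unfolding split_ext_sdp_def Let_def m_def P_def by blast
    show "vfunctor (tensor_struct tensor a b) (tensor_struct tensor a b) (phibar \<phi>)"
      unfolding vfunctor_def
    proof (intro allI)
      fix p q :: "'x \<times> 'y"
      obtain x y where p: "p = (x, y)" by force
      obtain x' y' where q: "q = (x', y')" by force
      have "tensor (m (0, y) (0, y')) (m (x, 0) (x', 0)) \<le> m (P (0, y) (x, 0)) (P (0, y') (x', 0))"
        using vg unfolding vgroup_def by blast
      moreover have "m (0, y) (0, y') = b y y'" unfolding m_def tensor_struct_def
        by (simp add: a0 q_top_l[OF Q])
      moreover have "m (x, 0) (x', 0) = a x x'" unfolding m_def tensor_struct_def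
        by (simp add: b0 q_top_r[OF Q])
      moreover have "P (0, y) (x, 0) = phibar \<phi> p" "P (0, y') (x', 0) = phibar \<phi> q"
        unfolding P_def sdp_plus_def phibar_def p q by simp_all
      ultimately have "tensor (b y y') (a x x') \<le> m (phibar \<phi> p) (phibar \<phi> q)" by simp
      moreover have "tensor_struct tensor a b p q = tensor (b y y') (a x x')"
        unfolding p q tensor_struct_def by (simp add: AC)
      ultimately show "tensor_struct tensor a b p q \<le> tensor_struct tensor a b (phibar \<phi> p) (phibar \<phi> q)"
        unfolding m_def by simp
    qed
  next
    assume fnc: "vfunctor (tensor_struct tensor a b) (tensor_struct tensor a b) (phibar \<phi>)"
    have funx: "tensor (a x x') (b y y') \<le> tensor (a (\<phi> y x) (\<phi> y' x')) (b y y')" for x x' y y'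
      using fnc unfolding vfunctor_def tensor_struct_def phibar_def
      by (metis fst_conv snd_conv)
    have vcm: "vcat tensor k m"
      unfolding vcat_def m_def tensor_struct_def assms(3)
    proof (intro conjI allI)
      fix x :: "'x \<times> 'y"
      show "top \<le> tensor (a (fst x) (fst x)) (b (snd x) (snd x))"
        by (simp add: a0 b0 q_top_l[OF Q])
    next
      fix x x' x'' :: "'x \<times> 'y"
      have "tensor (tensor (a (fst x) (fst x')) (b (snd x) (snd x')))
          (tensor (a (fst x') (fst x'')) (b (snd x') (snd x''))) =
          tensor (tensor (a (fst x) (fst x')) (a (fst x') (fst x'')))
          (tensor (b (snd x) (snd x')) (b (snd x') (snd x'')))" by (rule swap4)
      also have "\<dots> \<le> tensor (a (fst x) (fst x'')) (b (snd x) (snd x''))"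
        by (rule q_mono2[OF Q atr btr])
      finally show "tensor (tensor (a (fst x) (fst x')) (b (snd x) (snd x')))
          (tensor (a (fst x') (fst x'')) (b (snd x') (snd x''))) \<le>
          tensor (a (fst x) (fst x'')) (b (snd x) (snd x''))" .
    qed
    have mplus: "tensor (m p1 p2) (m p1' p2') \<le> m (P p1 p1') (P p2 p2')" for p1 p2 p1' p2'
    proof -
      obtain x1 y1 where p1: "p1 = (x1, y1)" by force
      obtain x2 y2 where p2: "p2 = (x2, y2)" by force
      obtain x1' y1' where p1': "p1' = (x1', y1')" by force
      obtain x2' y2' where p2': "p2' = (x2', y2')" by force
      have "tensor (m p1 p2) (m p1' p2') =
        tensor (a x1 x2) (tensor (tensor (a x1' x2') (b y1 y2)) (b y1' y2'))"
        unfolding m_def tensor_struct_def p1 p2 p1' p2' by (simp only: AC fst_conv snd_conv)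
      also have "\<dots> \<le> tensor (a x1 x2) (tensor (tensor (a (\<phi> y1 x1') (\<phi> y2 x2')) (b y1 y2)) (b y1' y2'))"
        by (intro q_mono_r[OF Q] q_mono_l[OF Q] funx)
      also have "\<dots> = tensor (tensor (a x1 x2) (a (\<phi> y1 x1') (\<phi> y2 x2'))) (tensor (b y1 y2) (b y1' y2'))"
        by (simp only: AC)
      also have "\<dots> \<le> tensor (a (x1 + \<phi> y1 x1') (x2 + \<phi> y2 x2')) (b (y1 + y1') (y2 + y2'))"
        by (rule q_mono2[OF Q aplus bplus])
      also have "\<dots> = m (P p1 p1') (P p2 p2')"
        unfolding m_def tensor_struct_def P_def sdp_plus_def p1 p2 p1' p2' by simp
      finally show ?thesis .
    qed
    have vgm: "vgroup tensor k m P"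
      unfolding vgroup_def using vcm mplus sdp_group[OF ga] P_def by blast
    have h1: "vhom a (+) m P incl1"
      unfolding vhom_def group_hom_def vfunctor_def m_def P_def tensor_struct_def sdp_plus_def incl1_def
      by (simp add: ga_id[OF ga] b0 q_top_r[OF Q])
    have h2: "vhom m P b (+) snd"
      unfolding vhom_def group_hom_def vfunctor_def m_def P_def tensor_struct_def sdp_plus_def
      by (simp add: q_le_r[OF Q])
    have h3: "vhom b (+) m P incl2"
      unfolding vhom_def group_hom_def vfunctor_def m_def P_def tensor_struct_def sdp_plus_def incl2_def
      by (simp add: ga_zero[OF ga] a0 q_top_l[OF Q])
    have ker: "is_vgrp_kernel TYPE('z) tensor k a (+) m P 0 incl1 snd"
      unfolding is_vgrp_kernel_def
    proof (intro conjI allI impI)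
      show "snd (incl1 x :: 'x \<times> 'y) = 0" for x by (simp add: incl1_def)
    next
      fix plusZ :: "'z \<Rightarrow> 'z \<Rightarrow> 'z" and d g
      assume H: "vgroup tensor k d plusZ \<and> vhom d plusZ m P g \<and> (\<forall>z. snd (g z) = (0::'y))"
      hence gz: "g z = incl1 (fst (g z))" for z by (metis incl1_def prod.collapse)
      have gh: "g (plusZ z z') = P (g z) (g z')" for z z'
        using H unfolding vhom_def group_hom_def by blast
      have gf: "d z z' \<le> m (g z) (g z')" for z z'
        using H unfolding vhom_def vfunctor_def by blast
      show "\<exists>!h. vhom d plusZ a (+) h \<and> (\<forall>z. incl1 (h z) = g z)"
      proof (rule ex1I[of _ "\<lambda>z. fst (g z)"])
        show "vhom d plusZ a (+) (\<lambda>z. fst (g z)) \<and> (\<forall>z. incl1 (fst (g z)) = g z)"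
        proof (intro conjI allI)
          show "incl1 (fst (g z)) = g z" for z using gz by metis
          show "vhom d plusZ a (+) (\<lambda>z. fst (g z))"
            unfolding vhom_def group_hom_def vfunctor_def
          proof (intro conjI allI)
            fix z z'
            show "fst (g (plusZ z z')) = fst (g z) + fst (g z')"
              using gh[of z z'] H by (simp add: P_def sdp_plus_def ga_id[OF ga])
            have "d z z' \<le> m (g z) (g z')" by (rule gf)
            also have "\<dots> = a (fst (g z)) (fst (g z'))"
              unfolding m_def tensor_struct_def using H by (simp add: b0 q_top_r[OF Q])
            finally show "d z z' \<le> a (fst (g z)) (fst (g z'))" .
          qed
        qed
      next
        fix h assume "vhom d plusZ a (+) h \<and> (\<forall>z. incl1 (h z) = g z)"
        hence "\<forall>z. (h z, 0) = g z" by (simp add: incl1_def)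
        hence "\<forall>z. h z = fst (g z)" by (metis fst_conv)
        thus "h = (\<lambda>z. fst (g z))" by blast
      qed
    qed
    show "split_ext_sdp TYPE('z) tensor k a b \<phi>"
      unfolding split_ext_sdp_def Let_def m_def[symmetric] P_def[symmetric]
      using vgm h1 h2 h3 ker by (simp add: incl2_def)
  qed
qed

end
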